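(* Let $R$ be a ring, let $d_{0}:X_{0}\to X_{1}$ be a homomorphism of right $R$-modules with kernel $K$, and let $\zeta:Q_{0}\to Q_{1}$ be a homomorphism between injective right $R$-modules $Q_0,Q_1$. Then $K\in\mathcal{B}_{\zeta}$ if and only if for every homomorphism $f\in\mathrm{Hom}_{R}(X_{0},Q_{1})$ there exist homomorphisms $s_{0}:X_{0}\to Q_{0}$ and $s_{1}:X_{1}\to Q_{1}$ such that $f=s_{1}d_{0}+\zeta s_{0}$.
   Context: $R$ is a unital associative ring and modules are right $R$-modules. For a homomorphism $\zeta:Q_0\to Q_1$, $\mathcal{B}_{\zeta}=\{X\in\mathrm{Mod}(R)\mid \mathrm{Hom}_R(X,\zeta):\mathrm{Hom}_R(X,Q_0)\to\mathrm{Hom}_R(X,Q_1)\text{ is an epimorphism}\}$. *)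

theory Defs
  imports "HOL-Algebra.Module"
begin

text \<open>Right R-modules over an arbitrary (not necessarily commutative) unital ring R.
  The field smult of the HOL-Algebra module record is used with the reading
  smult r x = x r (right scalar action).\<close>

definition right_module :: "('r, 'e) ring_scheme \<Rightarrow> ('r, 'a, 'm) module_scheme \<Rightarrow> bool" where
  "right_module R M \<longleftrightarrow> ring R \<and> abelian_group M \<and>
     (\<forall>r\<in>carrier R. \<forall>x\<in>carrier M. smult M r x \<in> carrier M) \<and>
     (\<forall>r\<in>carrier R. \<forall>x\<in>carrier M. \<forall>y\<in>carrier M.
        smult M r (x \<oplus>\<^bsub>M\<^esub> y) = smult M r x \<oplus>\<^bsub>M\<^esub> smult M r y) \<and>
     (\<forall>r\<in>carrier R. \<forall>s\<in>carrier R. \<forall>x\<in>carrier M.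
        smult M (r \<oplus>\<^bsub>R\<^esub> s) x = smult M r x \<oplus>\<^bsub>M\<^esub> smult M s x) \<and>
     (\<forall>r\<in>carrier R. \<forall>s\<in>carrier R. \<forall>x\<in>carrier M.
        smult M (r \<otimes>\<^bsub>R\<^esub> s) x = smult M s (smult M r x)) \<and>
     (\<forall>x\<in>carrier M. smult M \<one>\<^bsub>R\<^esub> x = x)"

definition rhom :: "('r, 'e) ring_scheme \<Rightarrow> ('r, 'a, 'm) module_scheme \<Rightarrow> ('r, 'b, 'n) module_scheme
    \<Rightarrow> ('a \<Rightarrow> 'b) set" where
  "rhom R M N = {f. f \<in> carrier M \<rightarrow> carrier N \<and>
     (\<forall>x\<in>carrier M. \<forall>y\<in>carrier M. f (x \<oplus>\<^bsub>M\<^esub> y) = f x \<oplus>\<^bsub>N\<^esub> f y) \<and>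
     (\<forall>r\<in>carrier R. \<forall>x\<in>carrier M. f (smult M r x) = smult N r (f x))}"

definition rker_module :: "('r, 'a, 'm) module_scheme \<Rightarrow> ('r, 'b, 'n) module_scheme
    \<Rightarrow> ('a \<Rightarrow> 'b) \<Rightarrow> ('r, 'a, 'm) module_scheme" where
  "rker_module X0 X1 d = X0\<lparr>carrier := {x \<in> carrier X0. d x = \<zero>\<^bsub>X1\<^esub>}\<rparr>"

text \<open>Injectivity of Q, tested against all right R-modules whose elements live in the type 'x
  (HOL cannot quantify over all types inside a formula).\<close>
definition injective_rmodule :: "('r, 'e) ring_scheme \<Rightarrow> ('r, 'q, 'm) module_scheme \<Rightarrow> 'x itself \<Rightarrow> bool" where
  "injective_rmodule R Q (T :: 'x itself) \<longleftrightarrow> right_module R Q \<and>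
     (\<forall>(A :: ('r, 'x) module) (B :: ('r, 'x) module) i g.
        right_module R A \<longrightarrow> right_module R B \<longrightarrow> i \<in> rhom R A B \<longrightarrow> inj_on i (carrier A) \<longrightarrow>
        g \<in> rhom R A Q \<longrightarrow> (\<exists>h \<in> rhom R B Q. \<forall>a\<in>carrier A. h (i a) = g a))"

definition in_B :: "('r, 'e) ring_scheme \<Rightarrow> ('r, 'c, 'm) module_scheme \<Rightarrow> ('r, 'd, 'n) module_scheme
    \<Rightarrow> ('c \<Rightarrow> 'd) \<Rightarrow> ('r, 'a, 'k) module_scheme \<Rightarrow> bool" where
  "in_B R Q0 Q1 zeta X \<longleftrightarrow>
     (\<forall>g \<in> rhom R X Q1. \<exists>t \<in> rhom R X Q0. \<forall>x\<in>carrier X. zeta (t x) = g x)"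

end

theory Submission
  imports Defs
begin

lemma rm_ag: "right_module R M \<Longrightarrow> abelian_group M"
  by (simp add: right_module_def)

lemma add_zero:
  assumes M: "abelian_group M" and N: "abelian_group N"
    and f: "f \<in> carrier M \<rightarrow> carrier N"
    and a: "\<forall>x\<in>carrier M. \<forall>y\<in>carrier M. f (x \<oplus>\<^bsub>M\<^esub> y) = f x \<oplus>\<^bsub>N\<^esub> f y"
  shows "f \<zero>\<^bsub>M\<^esub> = \<zero>\<^bsub>N\<^esub>"
proof -
  interpret M: abelian_group M by (rule M)
  interpret N: abelian_group N by (rule N)
  have c: "f \<zero>\<^bsub>M\<^esub> \<in> carrier N" using f by auto
  have "f \<zero>\<^bsub>M\<^esub> \<oplus>\<^bsub>N\<^esub> f \<zero>\<^bsub>M\<^esub> = f \<zero>\<^bsub>M\<^esub> \<oplus>\<^bsub>N\<^esub> \<zero>\<^bsub>N\<^esub>"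
    using a c by (metis M.l_zero M.zero_closed N.r_zero)
  then show ?thesis using c by simp
qed

lemma add_neg:
  assumes M: "abelian_group M" and N: "abelian_group N"
    and f: "f \<in> carrier M \<rightarrow> carrier N"
    and a: "\<forall>x\<in>carrier M. \<forall>y\<in>carrier M. f (x \<oplus>\<^bsub>M\<^esub> y) = f x \<oplus>\<^bsub>N\<^esub> f y"
    and x: "x \<in> carrier M"
  shows "f (\<ominus>\<^bsub>M\<^esub> x) = \<ominus>\<^bsub>N\<^esub> f x"
proof -
  interpret M: abelian_group M by (rule M)
  interpret N: abelian_group N by (rule N)
  have z: "f \<zero>\<^bsub>M\<^esub> = \<zero>\<^bsub>N\<^esub>" by (rule add_zero[OF M N f a])
  have "f (\<ominus>\<^bsub>M\<^esub> x) \<oplus>\<^bsub>N\<^esub> f x = \<zero>\<^bsub>N\<^esub>"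
    using a x z by (metis M.a_inv_closed M.l_neg)
  then show ?thesis using f x by (metis M.a_inv_closed N.minus_equality funcset_mem)
qed

lemma hom_zero: "right_module R M \<Longrightarrow> right_module R N \<Longrightarrow> f \<in> rhom R M N \<Longrightarrow> f \<zero>\<^bsub>M\<^esub> = \<zero>\<^bsub>N\<^esub>"
  by (rule add_zero) (auto simp: rm_ag rhom_def)

lemma hom_neg: "right_module R M \<Longrightarrow> right_module R N \<Longrightarrow> f \<in> rhom R M N \<Longrightarrow> x \<in> carrier M
   \<Longrightarrow> f (\<ominus>\<^bsub>M\<^esub> x) = \<ominus>\<^bsub>N\<^esub> f x"
  by (rule add_neg) (auto simp: rm_ag rhom_def)

lemma hom_carr: "f \<in> rhom R M N \<Longrightarrow> x \<in> carrier M \<Longrightarrow> f x \<in> carrier N"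
  by (auto simp: rhom_def)

lemma smult_neg: "right_module R M \<Longrightarrow> r \<in> carrier R \<Longrightarrow> x \<in> carrier M
   \<Longrightarrow> smult M r (\<ominus>\<^bsub>M\<^esub> x) = \<ominus>\<^bsub>M\<^esub> smult M r x"
  by (rule add_neg[where f="smult M r"]) (auto simp: rm_ag right_module_def)

lemma smult_zero: "right_module R M \<Longrightarrow> r \<in> carrier R
   \<Longrightarrow> smult M r \<zero>\<^bsub>M\<^esub> = \<zero>\<^bsub>M\<^esub>"
  by (rule add_zero[where f="smult M r"]) (auto simp: rm_ag right_module_def)

lemma hom_comp: "f \<in> rhom R M N \<Longrightarrow> g \<in> rhom R N P \<Longrightarrow> (\<lambda>x. g (f x)) \<in> rhom R M P"
  unfolding rhom_def by (auto simp: Pi_def right_module_def)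

lemma hom_diff:
  assumes M: "right_module R M" and N: "right_module R N"
    and f: "f \<in> rhom R M N" and g: "g \<in> rhom R M N"
  shows "(\<lambda>x. f x \<ominus>\<^bsub>N\<^esub> g x) \<in> rhom R M N"
proof -
  interpret M: abelian_group M by (rule rm_ag[OF M])
  interpret N: abelian_group N by (rule rm_ag[OF N])
  show ?thesis unfolding rhom_def
  proof (intro CollectI conjI ballI)
    show "(\<lambda>x. f x \<ominus>\<^bsub>N\<^esub> g x) \<in> carrier M \<rightarrow> carrier N"
      using f g by (auto simp: hom_carr)
  next
    fix x y assume x: "x \<in> carrier M" and y: "y \<in> carrier M"
    have fx: "f x \<in> carrier N" "f y \<in> carrier N" "g x \<in> carrier N" "g y \<in> carrier N"
      using f g x y by (auto simp: hom_carr)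
    have "f (x \<oplus>\<^bsub>M\<^esub> y) = f x \<oplus>\<^bsub>N\<^esub> f y" "g (x \<oplus>\<^bsub>M\<^esub> y) = g x \<oplus>\<^bsub>N\<^esub> g y"
      using f g x y by (auto simp: rhom_def)
    then show "f (x \<oplus>\<^bsub>M\<^esub> y) \<ominus>\<^bsub>N\<^esub> g (x \<oplus>\<^bsub>M\<^esub> y) =
        (f x \<ominus>\<^bsub>N\<^esub> g x) \<oplus>\<^bsub>N\<^esub> (f y \<ominus>\<^bsub>N\<^esub> g y)"
      using fx by (simp add: N.minus_eq N.minus_add N.a_ac)
  next
    fix r x assume r: "r \<in> carrier R" and x: "x \<in> carrier M"
    have fx: "f x \<in> carrier N" "g x \<in> carrier N"
      using f g x by (auto simp: hom_carr)
    have "f (smult M r x) = smult N r (f x)" "g (smult M r x) = smult N r (g x)"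
      using f g x r by (auto simp: rhom_def)
    moreover have "smult N r (f x \<ominus>\<^bsub>N\<^esub> g x) = smult N r (f x) \<ominus>\<^bsub>N\<^esub> smult N r (g x)"
    proof -
      have "smult N r (\<ominus>\<^bsub>N\<^esub> g x) = \<ominus>\<^bsub>N\<^esub> smult N r (g x)"
        by (rule smult_neg[OF N r fx(2)])
      then show ?thesis using N r fx by (simp add: N.minus_eq right_module_def)
    qed
    ultimately show "f (smult M r x) \<ominus>\<^bsub>N\<^esub> g (smult M r x) = smult N r (f x \<ominus>\<^bsub>N\<^esub> g x)"
      by simp
  qed
qed

lemma sub_rm:
  assumes M: "right_module R M" and H: "H \<subseteq> carrier M" and z: "\<zero>\<^bsub>M\<^esub> \<in> H"
    and a: "\<forall>x\<in>H. \<forall>y\<in>H. x \<oplus>\<^bsub>M\<^esub> y \<in> H"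
    and n: "\<forall>x\<in>H. \<ominus>\<^bsub>M\<^esub> x \<in> H"
    and s: "\<forall>r\<in>carrier R. \<forall>x\<in>H. smult M r x \<in> H"
  shows "right_module R (M\<lparr>carrier := H\<rparr>)"
proof -
  interpret M: abelian_group M by (rule rm_ag[OF M])
  have ag: "abelian_group (M\<lparr>carrier := H\<rparr>)"
  proof (rule abelian_groupI, goal_cases)
    case 1 then show ?case using a by simp
  next case 2 then show ?case using z by simp
  next case 3 then show ?case using H by (auto intro: M.a_assoc)
  next case 4 then show ?case using H by (auto intro: M.a_comm)
  next case 5 then show ?case using H by auto
  next case (6 x) then show ?case using H n by (intro bexI[of _ "\<ominus>\<^bsub>M\<^esub> x"]) (auto intro: M.l_neg)
  qed
  show ?thesis using M ag H s unfolding right_module_def by (auto simp: subset_iff)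
qed

lemma inj_ext:
  fixes A B :: "('r, 'x) module"
  assumes "injective_rmodule R Q TYPE('x)" "right_module R A" "right_module R B"
    "i \<in> rhom R A B" "inj_on i (carrier A)" "g \<in> rhom R A Q"
  shows "\<exists>h\<in>rhom R B Q. \<forall>a\<in>carrier A. h (i a) = g a"
  using assms unfolding injective_rmodule_def by blast

theorem lemma2p5:
  fixes R :: "('r, 'e) ring_scheme"
    and X0 :: "('r, 'a) module" and X1 :: "('r, 'b) module"
    and Q0 :: "('r, 'c) module" and Q1 :: "('r, 'd) module"
    and d0 :: "'a \<Rightarrow> 'b" and zeta :: "'c \<Rightarrow> 'd"
  assumes "ring R"
    and "right_module R X0" and "right_module R X1"
    and "d0 \<in> rhom R X0 X1"
    and "injective_rmodule R Q0 TYPE('a)" and "injective_rmodule R Q0 TYPE('b)"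
    and "injective_rmodule R Q1 TYPE('a)" and "injective_rmodule R Q1 TYPE('b)"
    and "zeta \<in> rhom R Q0 Q1"
  shows "in_B R Q0 Q1 zeta (rker_module X0 X1 d0) \<longleftrightarrow>
    (\<forall>f \<in> rhom R X0 Q1. \<exists>s0 \<in> rhom R X0 Q0. \<exists>s1 \<in> rhom R X1 Q1.
       \<forall>x \<in> carrier X0. f x = s1 (d0 x) \<oplus>\<^bsub>Q1\<^esub> zeta (s0 x))"
proof -
  note X0 = assms(2) and X1 = assms(3) and d = assms(4) and z = assms(9)
  have Q0: "right_module R Q0" and Q1: "right_module R Q1"
    using assms(5,7) by (auto simp: injective_rmodule_def)
  interpret X0: abelian_group X0 by (rule rm_ag[OF X0])
  interpret X1: abelian_group X1 by (rule rm_ag[OF X1])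
  interpret Q0: abelian_group Q0 by (rule rm_ag[OF Q0])
  interpret Q1: abelian_group Q1 by (rule rm_ag[OF Q1])
  define K where "K = rker_module X0 X1 d0"
  have cK: "carrier K = {x \<in> carrier X0. d0 x = \<zero>\<^bsub>X1\<^esub>}"
    and K: "K = X0\<lparr>carrier := {x \<in> carrier X0. d0 x = \<zero>\<^bsub>X1\<^esub>}\<rparr>"
    by (simp_all add: K_def rker_module_def)
  have dadd: "\<And>x y. x \<in> carrier X0 \<Longrightarrow> y \<in> carrier X0 \<Longrightarrow> d0 (x \<oplus>\<^bsub>X0\<^esub> y) = d0 x \<oplus>\<^bsub>X1\<^esub> d0 y"
    and dsm: "\<And>r x. r \<in> carrier R \<Longrightarrow> x \<in> carrier X0 \<Longrightarrow> d0 (smult X0 r x) = smult X1 r (d0 x)"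
    using d by (auto simp: rhom_def)
  have dz: "d0 \<zero>\<^bsub>X0\<^esub> = \<zero>\<^bsub>X1\<^esub>" by (rule hom_zero[OF X0 X1 d])
  have dn: "\<And>x. x \<in> carrier X0 \<Longrightarrow> d0 (\<ominus>\<^bsub>X0\<^esub> x) = \<ominus>\<^bsub>X1\<^esub> d0 x" by (rule hom_neg[OF X0 X1 d])
  have dc: "\<And>x. x \<in> carrier X0 \<Longrightarrow> d0 x \<in> carrier X1" using d by (rule hom_carr)
  have sm0: "\<And>r x. r \<in> carrier R \<Longrightarrow> x \<in> carrier X0 \<Longrightarrow> smult X0 r x \<in> carrier X0"
    using X0 by (auto simp: right_module_def)
  have rmK: "right_module R K" unfolding K
    by (rule sub_rm[OF X0]) (auto simp: dz dadd dn dsm smult_zero[OF X1] sm0)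
  have incl: "(\<lambda>x. x) \<in> rhom R K X0" by (auto simp: K rhom_def)
  have restr: "\<And>N h. h \<in> rhom R X0 N \<Longrightarrow> h \<in> rhom R K N" by (auto simp: K rhom_def)
  show ?thesis unfolding K_def[symmetric]
  proof
    assume B: "in_B R Q0 Q1 zeta K"
    show "\<forall>f \<in> rhom R X0 Q1. \<exists>s0 \<in> rhom R X0 Q0. \<exists>s1 \<in> rhom R X1 Q1.
       \<forall>x \<in> carrier X0. f x = s1 (d0 x) \<oplus>\<^bsub>Q1\<^esub> zeta (s0 x)"
    proof
      fix f assume f: "f \<in> rhom R X0 Q1"
      obtain t where t: "t \<in> rhom R K Q0" and tz: "\<forall>x\<in>carrier K. zeta (t x) = f x"
        using B restr[OF f] unfolding in_B_def by blast
      obtain s0 where s0: "s0 \<in> rhom R X0 Q0" and s0t: "\<forall>a\<in>carrier K. s0 a = t a"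
        using inj_ext[OF assms(5) rmK X0 incl _ t] by (auto simp: K)
      define phi where "phi = (\<lambda>x. f x \<ominus>\<^bsub>Q1\<^esub> zeta (s0 x))"
      have phi: "phi \<in> rhom R X0 Q1" unfolding phi_def
        by (rule hom_diff[OF X0 Q1 f hom_comp[OF s0 z]])
      have phiK: "\<And>x. x \<in> carrier K \<Longrightarrow> phi x = \<zero>\<^bsub>Q1\<^esub>"
        using tz s0t f by (auto simp: phi_def cK hom_carr Q1.r_neg Q1.minus_eq)
      have phieq: "\<And>x y. x \<in> carrier X0 \<Longrightarrow> y \<in> carrier X0 \<Longrightarrow> d0 x = d0 y \<Longrightarrow> phi x = phi y"
      proof -
        fix x y assume x: "x \<in> carrier X0" and y: "y \<in> carrier X0" and e: "d0 x = d0 y"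
        have "x \<oplus>\<^bsub>X0\<^esub> \<ominus>\<^bsub>X0\<^esub> y \<in> carrier K"
          using x y e dc by (simp add: cK dadd dn X1.r_neg)
        then have "phi (x \<oplus>\<^bsub>X0\<^esub> \<ominus>\<^bsub>X0\<^esub> y) = \<zero>\<^bsub>Q1\<^esub>" by (rule phiK)
        moreover have "phi (x \<oplus>\<^bsub>X0\<^esub> \<ominus>\<^bsub>X0\<^esub> y) = phi x \<oplus>\<^bsub>Q1\<^esub> \<ominus>\<^bsub>Q1\<^esub> phi y"
          using phi x y hom_neg[OF X0 Q1 phi y] by (auto simp: rhom_def)
        ultimately have "phi x \<oplus>\<^bsub>Q1\<^esub> \<ominus>\<^bsub>Q1\<^esub> phi y = \<zero>\<^bsub>Q1\<^esub>" by simp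
        then show "phi x = phi y" using hom_carr[OF phi x] hom_carr[OF phi y]
          by (metis Q1.a_inv_closed Q1.minus_equality Q1.minus_minus)
      qed
      define I where "I = X1\<lparr>carrier := d0 ` carrier X0\<rparr>"
      have rmI: "right_module R I" unfolding I_def
      proof (rule sub_rm[OF X1])
        show "d0 ` carrier X0 \<subseteq> carrier X1" using dc by auto
        show "\<zero>\<^bsub>X1\<^esub> \<in> d0 ` carrier X0" using dz by (metis X0.zero_closed image_eqI)
        show "\<forall>x\<in>d0 ` carrier X0. \<forall>y\<in>d0 ` carrier X0. x \<oplus>\<^bsub>X1\<^esub> y \<in> d0 ` carrier X0"
          using dadd by (metis (no_types, lifting) X0.a_closed image_iff)
        show "\<forall>x\<in>d0 ` carrier X0. \<ominus>\<^bsub>X1\<^esub> x \<in> d0 ` carrier X0"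
          using dn by (metis (no_types, lifting) X0.a_inv_closed image_iff)
        show "\<forall>r\<in>carrier R. \<forall>x\<in>d0 ` carrier X0. smult X1 r x \<in> d0 ` carrier X0"
          using dsm sm0 by (metis (no_types, lifting) image_iff)
      qed
      define h where "h = (\<lambda>y. phi (SOME x. x \<in> carrier X0 \<and> d0 x = y))"
      have hd: "\<And>x. x \<in> carrier X0 \<Longrightarrow> h (d0 x) = phi x"
      proof -
        fix x assume x: "x \<in> carrier X0"
        have "\<exists>x'. x' \<in> carrier X0 \<and> d0 x' = d0 x" using x by blast
        then have "(SOME x'. x' \<in> carrier X0 \<and> d0 x' = d0 x) \<in> carrier X0 \<and>
            d0 (SOME x'. x' \<in> carrier X0 \<and> d0 x' = d0 x) = d0 x" by (rule someI_ex)
        then show "h (d0 x) = phi x" unfolding h_def using phieq x by blast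
      qed
      have hI: "h \<in> rhom R I Q1" unfolding rhom_def I_def
        using hd hom_carr[OF phi] phi dadd dsm sm0
        by (auto simp: rhom_def) (metis X0.a_closed)+
      have inclI: "(\<lambda>x. x) \<in> rhom R I X1" by (auto simp: I_def rhom_def dc)
      obtain s1 where s1: "s1 \<in> rhom R X1 Q1" and s1h: "\<forall>a\<in>carrier I. s1 a = h a"
        using inj_ext[OF assms(8) rmI X1 inclI _ hI] by (auto simp: I_def)
      show "\<exists>s0 \<in> rhom R X0 Q0. \<exists>s1 \<in> rhom R X1 Q1.
         \<forall>x \<in> carrier X0. f x = s1 (d0 x) \<oplus>\<^bsub>Q1\<^esub> zeta (s0 x)"
      proof (intro bexI[OF _ s0] bexI[OF _ s1] ballI)
        fix x assume x: "x \<in> carrier X0"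
        have "s1 (d0 x) = phi x" using s1h hd x by (simp add: I_def)
        moreover have "f x \<in> carrier Q1" "zeta (s0 x) \<in> carrier Q1"
          using f s0 z x by (auto intro: hom_carr)
        ultimately show "f x = s1 (d0 x) \<oplus>\<^bsub>Q1\<^esub> zeta (s0 x)"
          by (simp add: phi_def Q1.minus_eq Q1.a_assoc Q1.l_neg)
      qed
    qed
  next
    assume H: "\<forall>f \<in> rhom R X0 Q1. \<exists>s0 \<in> rhom R X0 Q0. \<exists>s1 \<in> rhom R X1 Q1.
       \<forall>x \<in> carrier X0. f x = s1 (d0 x) \<oplus>\<^bsub>Q1\<^esub> zeta (s0 x)"
    show "in_B R Q0 Q1 zeta K" unfolding in_B_def
    proof
      fix g assume g: "g \<in> rhom R K Q1"
      obtain f where f: "f \<in> rhom R X0 Q1" and fg: "\<forall>a\<in>carrier K. f a = g a"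
        using inj_ext[OF assms(7) rmK X0 incl _ g] by (auto simp: K)
      obtain s0 s1 where s0: "s0 \<in> rhom R X0 Q0" and s1: "s1 \<in> rhom R X1 Q1"
        and e: "\<forall>x \<in> carrier X0. f x = s1 (d0 x) \<oplus>\<^bsub>Q1\<^esub> zeta (s0 x)"
        using H f by blast
      have s1z: "s1 \<zero>\<^bsub>X1\<^esub> = \<zero>\<^bsub>Q1\<^esub>" by (rule hom_zero[OF X1 Q1 s1])
      show "\<exists>t\<in>rhom R K Q0. \<forall>x\<in>carrier K. zeta (t x) = g x"
      proof (intro bexI[of _ s0] ballI)
        show "s0 \<in> rhom R K Q0" by (rule restr[OF s0])
        fix x assume x: "x \<in> carrier K"
        then have x0: "x \<in> carrier X0" and dx: "d0 x = \<zero>\<^bsub>X1\<^esub>" by (auto simp: cK)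
        have "zeta (s0 x) \<in> carrier Q1" using s0 z x0 by (auto intro: hom_carr)
        then have "f x = zeta (s0 x)" using e x0 dx s1z by simp
        then show "zeta (s0 x) = g x" using fg x by simp
      qed
    qed
  qed
qed

end
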